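(* Let $P$ be a poset and let $C_2$ denote the 2-chain. If two elements of $P$ are $(C_2, 2, k)$-symmetric, then $k \in \{0, 1\}$.
   Context: The 2-chain $C_2$ is the poset $\{x<y\}$. For a poset $X$, $\ell(X)$ is the cardinality of a longest chain in $X$. A subset $A$ of a poset $X$ is maximally ordered in $X$ if $|\{(a,b)\in A\times A : a<b\}|$ is maximal among all subsets of $X$ of cardinality $|A|$. For $\sigma\in\mathrm{Aut}(P)$ let $\Sigma(\sigma)=\{a\in P:\sigma(a)\ne a\}$. For a finite poset $Q$ and integer $r\ge2$: $\sigma\in\mathrm{Aut}(P)$ is a $(Q,r)$-generator if there exist subsets $S_0,\dots,S_{r-1}\subset\Sigma(\sigma)$, each isomorphic to $Q$, which are smallest maximally ordered subsets of $\Sigma(\sigma)$ with $\sigma(S_i)=S_{(i+1)\bmod r}$, $\ell(S_i)=\ell(\Sigma(\sigma))$ for all $i$, and $\bigcup_i S_i=\Sigma(\sigma)$; any two distinct $S_i,S_j$ are $(Q,r)$-symmetric subsets. Elements $a,b\in P$ are $(Q,r,0)$-symmetric if $a=b$; $(Q,r,1)$-symmetric if there are $(Q,r)$-symmetric subsets $A,B$ with $(Q,r)$-generator $\sigma$ such that $a\in A$ and $b=\sigma^q(a)\in B$ for some $1\le q<r$; for $n\ge2$, $(Q,r,n)$-symmetric if they are not $(Q,r,j)$-symmetric for any $j<n$ but there exist $c\in P$ and $j<n$ with $a$ $(Q,r,j)$-symmetric to $c$ and $c$ $(Q,r,n-j)$-symmetric to $b$. *)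

theory Defs
  imports Main
begin

definition poset :: "'a set \<Rightarrow> ('a \<Rightarrow> 'a \<Rightarrow> bool) \<Rightarrow> bool" where
  "poset P le \<longleftrightarrow>
     (\<forall>a\<in>P. le a a) \<and>
     (\<forall>a\<in>P. \<forall>b\<in>P. le a b \<and> le b a \<longrightarrow> a = b) \<and>
     (\<forall>a\<in>P. \<forall>b\<in>P. \<forall>c\<in>P. le a b \<and> le b c \<longrightarrow> le a c)"

definition strict :: "('a \<Rightarrow> 'a \<Rightarrow> bool) \<Rightarrow> 'a \<Rightarrow> 'a \<Rightarrow> bool" where
  "strict le a b \<longleftrightarrow> le a b \<and> a \<noteq> b"

definition is_aut :: "'a set \<Rightarrow> ('a \<Rightarrow> 'a \<Rightarrow> bool) \<Rightarrow> ('a \<Rightarrow> 'a) \<Rightarrow> bool" where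
  "is_aut P le \<sigma> \<longleftrightarrow> bij_betw \<sigma> P P \<and> (\<forall>a\<in>P. \<forall>b\<in>P. le a b \<longleftrightarrow> le (\<sigma> a) (\<sigma> b))"

definition supp :: "'a set \<Rightarrow> ('a \<Rightarrow> 'a) \<Rightarrow> 'a set" where
  "supp P \<sigma> = {a \<in> P. \<sigma> a \<noteq> a}"

definition is_chain :: "('a \<Rightarrow> 'a \<Rightarrow> bool) \<Rightarrow> 'a set \<Rightarrow> bool" where
  "is_chain le C \<longleftrightarrow> (\<forall>a\<in>C. \<forall>b\<in>C. le a b \<or> le b a)"

definition chain_len :: "('a \<Rightarrow> 'a \<Rightarrow> bool) \<Rightarrow> 'a set \<Rightarrow> nat" where
  "chain_len le X = Max {card C | C. C \<subseteq> X \<and> is_chain le C}"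

definition n_ordered :: "('a \<Rightarrow> 'a \<Rightarrow> bool) \<Rightarrow> 'a set \<Rightarrow> nat" where
  "n_ordered le A = card {(a, b). a \<in> A \<and> b \<in> A \<and> strict le a b}"

definition max_ordered :: "('a \<Rightarrow> 'a \<Rightarrow> bool) \<Rightarrow> 'a set \<Rightarrow> 'a set \<Rightarrow> bool" where
  "max_ordered le X A \<longleftrightarrow> A \<subseteq> X \<and>
     (\<forall>B. B \<subseteq> X \<and> card B = card A \<longrightarrow> n_ordered le B \<le> n_ordered le A)"

definition order_iso :: "'a set \<Rightarrow> ('a \<Rightarrow> 'a \<Rightarrow> bool) \<Rightarrow> 'q set \<Rightarrow> ('q \<Rightarrow> 'q \<Rightarrow> bool) \<Rightarrow> bool" where
  "order_iso S le Q leQ \<longleftrightarrow>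
     (\<exists>f. bij_betw f S Q \<and> (\<forall>a\<in>S. \<forall>b\<in>S. le a b \<longleftrightarrow> leQ (f a) (f b)))"

text \<open>sigma is a (Q,r)-generator witnessed by the family S 0, ..., S (r-1).
  "Smallest maximally ordered subsets" is read as: maximally ordered in Sigma(sigma),
  with longest chain of length l(Sigma(sigma)), and of minimum cardinality among all
  maximally ordered subsets of Sigma(sigma) with that chain length.\<close>
definition generator_family ::
  "'a set \<Rightarrow> ('a \<Rightarrow> 'a \<Rightarrow> bool) \<Rightarrow> 'q set \<Rightarrow> ('q \<Rightarrow> 'q \<Rightarrow> bool) \<Rightarrow> nat \<Rightarrow>
   ('a \<Rightarrow> 'a) \<Rightarrow> (nat \<Rightarrow> 'a set) \<Rightarrow> bool" where
  "generator_family P le Q leQ r \<sigma> S \<longleftrightarrow>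
     is_aut P le \<sigma> \<and>
     (\<forall>i<r. S i \<subseteq> supp P \<sigma> \<and>
            order_iso (S i) le Q leQ \<and>
            max_ordered le (supp P \<sigma>) (S i) \<and>
            chain_len le (S i) = chain_len le (supp P \<sigma>) \<and>
            (\<forall>T. max_ordered le (supp P \<sigma>) T \<and> chain_len le T = chain_len le (supp P \<sigma>)
                 \<longrightarrow> card (S i) \<le> card T) \<and>
            \<sigma> ` (S i) = S ((i + 1) mod r)) \<and>
     (\<Union>i<r. S i) = supp P \<sigma>"

definition is_generator ::
  "'a set \<Rightarrow> ('a \<Rightarrow> 'a \<Rightarrow> bool) \<Rightarrow> 'q set \<Rightarrow> ('q \<Rightarrow> 'q \<Rightarrow> bool) \<Rightarrow> nat \<Rightarrow> ('a \<Rightarrow> 'a) \<Rightarrow> bool" where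
  "is_generator P le Q leQ r \<sigma> \<longleftrightarrow> (\<exists>S. generator_family P le Q leQ r \<sigma> S)"

definition sym1 ::
  "'a set \<Rightarrow> ('a \<Rightarrow> 'a \<Rightarrow> bool) \<Rightarrow> 'q set \<Rightarrow> ('q \<Rightarrow> 'q \<Rightarrow> bool) \<Rightarrow> nat \<Rightarrow> 'a \<Rightarrow> 'a \<Rightarrow> bool" where
  "sym1 P le Q leQ r a b \<longleftrightarrow>
     (\<exists>\<sigma> S i j q. generator_family P le Q leQ r \<sigma> S \<and> i < r \<and> j < r \<and> S i \<noteq> S j \<and>
        a \<in> S i \<and> 1 \<le> q \<and> q < r \<and> b = (\<sigma> ^^ q) a \<and> b \<in> S j)"

text \<open>(Q,r,n)-symmetry. In the clause for n >= 2 the intermediate index j is taken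
  with 0 < j < n; the case j = 0 would only restate the defined relation itself.\<close>
function symk ::
  "'a set \<Rightarrow> ('a \<Rightarrow> 'a \<Rightarrow> bool) \<Rightarrow> 'q set \<Rightarrow> ('q \<Rightarrow> 'q \<Rightarrow> bool) \<Rightarrow> nat \<Rightarrow> nat \<Rightarrow> 'a \<Rightarrow> 'a \<Rightarrow> bool" where
  "symk P le Q leQ r 0 a b = (a = b)"
| "symk P le Q leQ r (Suc 0) a b = sym1 P le Q leQ r a b"
| "symk P le Q leQ r (Suc (Suc m)) a b =
     ((\<forall>j \<in> {..<Suc (Suc m)}. \<not> symk P le Q leQ r j a b) \<and>
      (\<exists>c\<in>P. \<exists>j \<in> {1..<Suc (Suc m)}.
          symk P le Q leQ r j a c \<and> symk P le Q leQ r (Suc (Suc m) - j) c b))"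
  by pat_completeness auto
termination
  by (relation "measure (\<lambda>(P, le, Q, leQ, r, n, a, b). n)") auto

text \<open>The 2-chain C_2 = {x < y}, realised as bool with False < True.\<close>
definition C2 :: "bool set" where "C2 = UNIV"
definition C2_le :: "bool \<Rightarrow> bool \<Rightarrow> bool" where "C2_le x y \<longleftrightarrow> x \<le> y"

end

theory Submission
  imports Defs
begin

lemma aut_inv:
  assumes "is_aut P le \<tau>"
  shows "is_aut P le (inv_into P \<tau>)"
proof -
  have b: "bij_betw \<tau> P P" using assms by (simp add: is_aut_def)
  have bi: "bij_betw (inv_into P \<tau>) P P" using bij_betw_inv_into[OF b] .
  have "le x y \<longleftrightarrow> le (inv_into P \<tau> x) (inv_into P \<tau> y)" if "x \<in> P" "y \<in> P" for x y
  proof -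
    have "inv_into P \<tau> x \<in> P" "inv_into P \<tau> y \<in> P" using bi that bij_betwE by blast+
    moreover have "\<tau> (inv_into P \<tau> x) = x" "\<tau> (inv_into P \<tau> y) = y"
      using that b by (simp_all add: bij_betw_def f_inv_into_f)
    ultimately show ?thesis using assms unfolding is_aut_def by metis
  qed
  thus ?thesis using bi by (simp add: is_aut_def)
qed

lemma aut_card:
  assumes "is_aut P le \<tau>" "A \<subseteq> P"
  shows "card (\<tau> ` A) = card A"
  using assms by (meson bij_betw_def card_image inj_on_subset is_aut_def)

lemma aut_inj: "is_aut P le \<tau> \<Longrightarrow> inj_on \<tau> P"
  by (simp add: is_aut_def bij_betw_def)

lemma aut_maps: "is_aut P le \<tau> \<Longrightarrow> x \<in> P \<Longrightarrow> \<tau> x \<in> P"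
  by (meson bij_betwE is_aut_def)

lemma aut_le: "is_aut P le \<tau> \<Longrightarrow> x \<in> P \<Longrightarrow> y \<in> P \<Longrightarrow> le (\<tau> x) (\<tau> y) \<longleftrightarrow> le x y"
  by (simp add: is_aut_def)

lemma aut_n_ordered:
  assumes "is_aut P le \<tau>" "A \<subseteq> P"
  shows "n_ordered le (\<tau> ` A) = n_ordered le A"
proof -
  have inj: "inj_on \<tau> P" using aut_inj[OF assms(1)] .
  have "{(x, y). x \<in> \<tau> ` A \<and> y \<in> \<tau> ` A \<and> strict le x y} =
        map_prod \<tau> \<tau> ` {(x, y). x \<in> A \<and> y \<in> A \<and> strict le x y}"
  proof (rule set_eqI, rule iffI)
    fix p assume "p \<in> {(x, y). x \<in> \<tau> ` A \<and> y \<in> \<tau> ` A \<and> strict le x y}"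
    then obtain x y where p: "p = (\<tau> x, \<tau> y)" "x \<in> A" "y \<in> A" "strict le (\<tau> x) (\<tau> y)" by auto
    hence "strict le x y" using assms inj unfolding strict_def
      by (metis aut_le inj_on_contraD subsetD)
    thus "p \<in> map_prod \<tau> \<tau> ` {(x, y). x \<in> A \<and> y \<in> A \<and> strict le x y}" using p by auto
  next
    fix p assume "p \<in> map_prod \<tau> \<tau> ` {(x, y). x \<in> A \<and> y \<in> A \<and> strict le x y}"
    then obtain x y where p: "p = (\<tau> x, \<tau> y)" "x \<in> A" "y \<in> A" "strict le x y" by auto
    have xy: "x \<in> P" "y \<in> P" using p assms(2) by auto
    hence "strict le (\<tau> x) (\<tau> y)" using p(4) aut_le[OF assms(1) xy] inj_on_contraD[OF inj _ xy] unfolding strict_def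
      by blast
    thus "p \<in> {(x, y). x \<in> \<tau> ` A \<and> y \<in> \<tau> ` A \<and> strict le x y}" using p by auto
  qed
  moreover have "inj_on (map_prod \<tau> \<tau>) {(x, y). x \<in> A \<and> y \<in> A \<and> strict le x y}"
    using inj assms(2) unfolding inj_on_def by auto
  ultimately show ?thesis unfolding n_ordered_def by (simp add: card_image)
qed

lemma aut_chain:
  assumes "is_aut P le \<tau>" "C \<subseteq> P"
  shows "is_chain le (\<tau> ` C) \<longleftrightarrow> is_chain le C"
  using assms unfolding is_chain_def by (auto simp: aut_le subset_iff)

lemma aut_chain_len:
  assumes "is_aut P le \<tau>" "A \<subseteq> P"
  shows "chain_len le (\<tau> ` A) = chain_len le A"
proof -
  have "{card C | C. C \<subseteq> \<tau> ` A \<and> is_chain le C} = {card C | C. C \<subseteq> A \<and> is_chain le C}"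
  proof (rule set_eqI, rule iffI)
    fix n assume "n \<in> {card C | C. C \<subseteq> \<tau> ` A \<and> is_chain le C}"
    then obtain C where C: "n = card C" "C \<subseteq> \<tau> ` A" "is_chain le C" by auto
    then obtain D where D: "D \<subseteq> A" "C = \<tau> ` D" by (meson subset_imageE)
    have "is_chain le D" using aut_chain[OF assms(1), of D] D C assms(2) by auto
    moreover have "n = card D" using C D aut_card[OF assms(1), of D] assms(2) by auto
    ultimately show "n \<in> {card C | C. C \<subseteq> A \<and> is_chain le C}" using D by auto
  next
    fix n assume "n \<in> {card C | C. C \<subseteq> A \<and> is_chain le C}"
    then obtain D where D: "n = card D" "D \<subseteq> A" "is_chain le D" by auto
    have "is_chain le (\<tau> ` D)" using aut_chain[OF assms(1), of D] D assms(2) by auto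
    moreover have "n = card (\<tau> ` D)" using D aut_card[OF assms(1), of D] assms(2) by auto
    ultimately show "n \<in> {card C | C. C \<subseteq> \<tau> ` A \<and> is_chain le C}" using D by auto
  qed
  thus ?thesis unfolding chain_len_def by simp
qed

lemma aut_order_iso:
  assumes "is_aut P le \<tau>" "A \<subseteq> P" "order_iso A le Q leQ"
  shows "order_iso (\<tau> ` A) le Q leQ"
proof -
  obtain f where f: "bij_betw f A Q" "\<forall>a\<in>A. \<forall>b\<in>A. le a b \<longleftrightarrow> leQ (f a) (f b)"
    using assms(3) unfolding order_iso_def by blast
  have inj: "inj_on \<tau> A" using aut_inj[OF assms(1)] assms(2) inj_on_subset by blast
  define g where "g = f \<circ> inv_into A \<tau>"
  have bg: "bij_betw g (\<tau> ` A) Q" unfolding g_def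
    using bij_betw_trans[OF bij_betw_inv_into[OF inj_on_imp_bij_betw[OF inj]] f(1)] .
  have "le x y \<longleftrightarrow> leQ (g x) (g y)" if xy: "x \<in> \<tau> ` A" "y \<in> \<tau> ` A" for x y
  proof -
    obtain x' where x': "x' \<in> A" "x = \<tau> x'" using xy(1) by blast
    obtain y' where y': "y' \<in> A" "y = \<tau> y'" using xy(2) by blast
    have i1: "inv_into A \<tau> x = x'" using x' inv_into_f_f[OF inj] by simp
    have i2: "inv_into A \<tau> y = y'" using y' inv_into_f_f[OF inj] by simp
    have P: "x' \<in> P" "y' \<in> P" using x' y' assms(2) by auto
    have "le x y \<longleftrightarrow> le x' y'" using aut_le[OF assms(1) P] x' y' by simp
    also have "\<dots> \<longleftrightarrow> leQ (f x') (f y')" using f(2) x' y' by blast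
    finally show ?thesis unfolding g_def using i1 i2 by simp
  qed
  hence "bij_betw g (\<tau> ` A) Q \<and> (\<forall>a\<in>\<tau> ` A. \<forall>b\<in>\<tau> ` A. le a b \<longleftrightarrow> leQ (g a) (g b))"
    using bg by blast
  thus ?thesis unfolding order_iso_def by blast
qed

lemma aut_max_ordered:
  assumes "is_aut P le \<tau>" "X \<subseteq> P" "max_ordered le X A"
  shows "max_ordered le (\<tau> ` X) (\<tau> ` A)"
proof -
  have AX: "A \<subseteq> X" using assms(3) unfolding max_ordered_def by (rule conjunct1)
  have AP: "A \<subseteq> P" using AX assms(2) by blast
  have "n_ordered le B \<le> n_ordered le (\<tau> ` A)" if BX: "B \<subseteq> \<tau> ` X" and Bc: "card B = card (\<tau> ` A)" for B
  proof -
    obtain D where D: "D \<subseteq> X" "B = \<tau> ` D" using BX by (meson subset_imageE)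
    have DP: "D \<subseteq> P" using D assms(2) by blast
    have "card D = card A" using Bc D(2) aut_card[OF assms(1) DP] aut_card[OF assms(1) AP] by simp
    moreover have "\<forall>B. B \<subseteq> X \<and> card B = card A \<longrightarrow> n_ordered le B \<le> n_ordered le A"
      using assms(3) unfolding max_ordered_def by (rule conjunct2)
    ultimately have "n_ordered le D \<le> n_ordered le A" using D(1) by simp
    thus ?thesis using D(2) aut_n_ordered[OF assms(1) DP] aut_n_ordered[OF assms(1) AP] by simp
  qed
  moreover have "\<tau> ` A \<subseteq> \<tau> ` X" using AX by (rule image_mono)
  ultimately show ?thesis unfolding max_ordered_def by simp
qed


lemma inv_img:
  assumes "is_aut P le \<tau>" "A \<subseteq> P"
  shows "inv_into P \<tau> ` \<tau> ` A = A"
proof -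
  have "inj_on \<tau> P" using aut_inj[OF assms(1)] .
  hence "\<forall>x\<in>A. inv_into P \<tau> (\<tau> x) = x" using assms(2) by auto
  thus ?thesis by (simp add: image_image)
qed

lemma conj_gen:
  assumes gf: "generator_family P le Q leQ r \<sigma> S" and ta: "is_aut P le \<tau>"
  shows "generator_family P le Q leQ r (\<tau> \<circ> \<sigma> \<circ> inv_into P \<tau>) (\<lambda>i. \<tau> ` S i)"
proof -
  define ti where "ti = inv_into P \<tau>"
  define \<rho> where "\<rho> = \<tau> \<circ> \<sigma> \<circ> ti"
  have sa: "is_aut P le \<sigma>" using gf unfolding generator_family_def by (rule conjunct1)
  have gfi: "\<forall>i<r. S i \<subseteq> supp P \<sigma> \<and>
            order_iso (S i) le Q leQ \<and>
            max_ordered le (supp P \<sigma>) (S i) \<and>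
            chain_len le (S i) = chain_len le (supp P \<sigma>) \<and>
            (\<forall>T. max_ordered le (supp P \<sigma>) T \<and> chain_len le T = chain_len le (supp P \<sigma>)
                 \<longrightarrow> card (S i) \<le> card T) \<and>
            \<sigma> ` (S i) = S ((i + 1) mod r)"
    using gf unfolding generator_family_def by (elim conjE)
  have gfu: "(\<Union>i<r. S i) = supp P \<sigma>" using gf unfolding generator_family_def by (elim conjE)
  have tia: "is_aut P le ti" unfolding ti_def using aut_inv[OF ta] .
  have injt: "inj_on \<tau> P" using aut_inj[OF ta] .
  have tb: "bij_betw \<tau> P P" using ta unfolding is_aut_def by blast
  have t_ti: "\<tau> (ti x) = x" if "x \<in> P" for x
    unfolding ti_def using that tb by (simp add: bij_betw_def f_inv_into_f)
  have ti_t: "ti (\<tau> x) = x" if "x \<in> P" for x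
    unfolding ti_def using that injt by simp
  have tiP: "ti x \<in> P" if "x \<in> P" for x using aut_maps[OF tia that] .
  have tP: "\<tau> x \<in> P" if "x \<in> P" for x using aut_maps[OF ta that] .
  have sP: "\<sigma> x \<in> P" if "x \<in> P" for x using aut_maps[OF sa that] .
  have suppP: "supp P \<sigma> \<subseteq> P" unfolding supp_def by blast
  have ra: "is_aut P le \<rho>"
  proof -
    have sb: "bij_betw \<sigma> P P" using sa unfolding is_aut_def by (rule conjunct1)
    have tib: "bij_betw ti P P" using tia unfolding is_aut_def by (rule conjunct1)
    have "bij_betw \<rho> P P" unfolding \<rho>_def
      using bij_betw_trans[OF bij_betw_trans[OF tib sb] tb] by (simp add: comp_assoc)
    moreover have "le x y \<longleftrightarrow> le (\<rho> x) (\<rho> y)" if "x \<in> P" "y \<in> P" for x y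
      using that aut_le[OF ta] aut_le[OF sa] aut_le[OF tia] tiP sP unfolding \<rho>_def by simp
    ultimately show ?thesis unfolding is_aut_def by blast
  qed
  have supr: "supp P \<rho> = \<tau> ` supp P \<sigma>"
  proof (rule set_eqI, rule iffI)
    fix x assume "x \<in> supp P \<rho>"
    hence x: "x \<in> P" "\<rho> x \<noteq> x" unfolding supp_def by auto
    have "\<sigma> (ti x) \<noteq> ti x" using x t_ti unfolding \<rho>_def by auto
    hence "ti x \<in> supp P \<sigma>" using tiP[OF x(1)] unfolding supp_def by simp
    moreover have "x = \<tau> (ti x)" using t_ti x(1) by simp
    ultimately show "x \<in> \<tau> ` supp P \<sigma>" by blast
  next
    fix x assume "x \<in> \<tau> ` supp P \<sigma>"
    then obtain y where y: "y \<in> P" "\<sigma> y \<noteq> y" "x = \<tau> y" unfolding supp_def by blast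
    have "\<rho> x = \<tau> (\<sigma> y)" unfolding \<rho>_def using y ti_t by simp
    moreover have "\<tau> (\<sigma> y) \<noteq> \<tau> y" using inj_on_contraD[OF injt y(2) sP[OF y(1)] y(1)] .
    ultimately show "x \<in> supp P \<rho>" unfolding supp_def using y tP by auto
  qed
  have main: "\<tau> ` S i \<subseteq> supp P \<rho> \<and>
            order_iso (\<tau> ` S i) le Q leQ \<and>
            max_ordered le (supp P \<rho>) (\<tau> ` S i) \<and>
            chain_len le (\<tau> ` S i) = chain_len le (supp P \<rho>) \<and>
            (\<forall>T. max_ordered le (supp P \<rho>) T \<and> chain_len le T = chain_len le (supp P \<rho>)
                 \<longrightarrow> card (\<tau> ` S i) \<le> card T) \<and>
            \<rho> ` (\<tau> ` S i) = \<tau> ` S ((i + 1) mod r)" if ir: "i < r" for i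
  proof -
    have Si: "S i \<subseteq> supp P \<sigma>" "order_iso (S i) le Q leQ" "max_ordered le (supp P \<sigma>) (S i)"
      "chain_len le (S i) = chain_len le (supp P \<sigma>)"
      "\<forall>T. max_ordered le (supp P \<sigma>) T \<and> chain_len le T = chain_len le (supp P \<sigma>)
                 \<longrightarrow> card (S i) \<le> card T"
      "\<sigma> ` (S i) = S ((i + 1) mod r)" using gfi[rule_format, OF ir] by simp_all
    have SiP: "S i \<subseteq> P" using Si(1) suppP by blast
    have c1: "\<tau> ` S i \<subseteq> supp P \<rho>" unfolding supr using Si(1) by (rule image_mono)
    have c2: "order_iso (\<tau> ` S i) le Q leQ" using aut_order_iso[OF ta SiP Si(2)] .
    have c3: "max_ordered le (supp P \<rho>) (\<tau> ` S i)" unfolding supr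
      using aut_max_ordered[OF ta suppP Si(3)] .
    have c4: "chain_len le (\<tau> ` S i) = chain_len le (supp P \<rho>)" unfolding supr
      using aut_chain_len[OF ta SiP] aut_chain_len[OF ta suppP] Si(4) by simp
    have c5: "card (\<tau> ` S i) \<le> card T"
      if T: "max_ordered le (supp P \<rho>) T" "chain_len le T = chain_len le (supp P \<rho>)" for T
    proof -
      have TX: "T \<subseteq> \<tau> ` supp P \<sigma>" using T(1) unfolding supr max_ordered_def by (rule conjunct1)
      have tsP: "\<tau> ` supp P \<sigma> \<subseteq> P" using suppP tP by blast
      have TP: "T \<subseteq> P" using TX tsP by blast
      have e: "ti ` \<tau> ` supp P \<sigma> = supp P \<sigma>" unfolding ti_def using inv_img[OF ta suppP] .
      have m: "max_ordered le (supp P \<sigma>) (ti ` T)"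
        using aut_max_ordered[OF tia tsP, of T] T(1) unfolding supr e by simp
      have "chain_len le (ti ` T) = chain_len le (supp P \<sigma>)"
        using aut_chain_len[OF tia TP] T(2) aut_chain_len[OF ta suppP] unfolding supr by simp
      hence "card (S i) \<le> card (ti ` T)" using Si(5) m by blast
      thus ?thesis using aut_card[OF tia TP] aut_card[OF ta SiP] by simp
    qed
    have c6: "\<rho> ` (\<tau> ` S i) = \<tau> ` S ((i + 1) mod r)"
    proof -
      have "\<rho> ` (\<tau> ` S i) = \<tau> ` \<sigma> ` S i" unfolding \<rho>_def image_image
        using ti_t SiP by (intro image_cong) auto
      thus ?thesis using Si(6) by simp
    qed
    show ?thesis using c1 c2 c3 c4 c5 c6 by simp
  qed
  have un: "(\<Union>i<r. \<tau> ` S i) = supp P \<rho>" unfolding supr gfu[symmetric] by (rule image_UN[symmetric])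
  show ?thesis unfolding generator_family_def \<rho>_def[symmetric] ti_def[symmetric]
    using ra main un by simp
qed


lemma poset_antisym: "poset P le \<Longrightarrow> x \<in> P \<Longrightarrow> y \<in> P \<Longrightarrow> le x y \<Longrightarrow> le y x \<Longrightarrow> x = y"
  unfolding poset_def by blast

lemma swap_eq:
  assumes "poset P le" "is_aut P le \<sigma>" "x \<in> P" "y \<in> P" "\<sigma> x = y" "\<sigma> y = x" "le x y"
  shows "x = y"
proof -
  have "le y x" using aut_le[OF assms(2) assms(3) assms(4)] assms(5-7) by simp
  thus ?thesis using poset_antisym[OF assms(1,3,4,7)] by simp
qed

lemma contra:
  assumes po: "poset P le" and sa: "is_aut P le \<sigma>" and ta: "is_aut P le \<tau>"
    and P: "a \<in> P" "a' \<in> P" "c \<in> P" "c'' \<in> P" "b \<in> P"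
    and s1: "\<sigma> a = c" "\<sigma> c = a" "\<sigma> (\<sigma> a') = a'"
    and t1: "\<tau> c = b" "\<tau> b = c" "\<tau> (\<tau> c'') = c''"
    and ne: "a' \<noteq> a" "c'' \<noteq> c"
    and ch: "le a a' \<or> le a' a" "le c c'' \<or> le c'' c"
    and ss: "supp P \<sigma> = {a, a', c, \<sigma> a'}" and st: "supp P \<tau> = {c, c'', b, \<tau> c''}"
    and ab: "a \<noteq> b" and ta_ne: "\<tau> a \<noteq> a" and sb_ne: "\<sigma> b \<noteq> b"
  shows False
proof -
  define e where "e = \<sigma> a'"
  define d where "d = \<tau> c''"
  have eP: "e \<in> P" unfolding e_def using aut_maps[OF sa P(2)] .
  have dP: "d \<in> P" unfolding d_def using aut_maps[OF ta P(4)] .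
  have se: "\<sigma> e = a'" unfolding e_def using s1 by simp
  have td: "\<tau> d = c''" unfolding d_def using t1 by simp
  have "a \<in> supp P \<sigma>" using ss by simp
  hence ac: "a \<noteq> c" using s1 unfolding supp_def by auto
  have "c \<in> supp P \<tau>" using st by simp
  hence bc: "b \<noteq> c" using t1 unfolding supp_def by auto
  have "a \<in> supp P \<tau>" using P ta_ne unfolding supp_def by simp
  hence a_cases: "a = c'' \<or> a = d" using ac ab st unfolding d_def by auto
  have "b \<in> supp P \<sigma>" using P sb_ne unfolding supp_def by simp
  hence b_cases: "b = a' \<or> b = e" using ab bc ss unfolding e_def by auto
  have ce: "le c e \<or> le e c" using ch(1) aut_le[OF sa P(1) P(2)] aut_le[OF sa P(2) P(1)] s1
    unfolding e_def by auto
  show False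
  proof (cases "a = c''")
    case True
    hence "le c a \<or> le a c" using ch(2) by auto
    thus False using swap_eq[OF po sa P(1) P(3) s1(1) s1(2)] swap_eq[OF po sa P(3) P(1) s1(2) s1(1)] ac
      by auto
  next
    case False
    hence ad: "a = d" using a_cases by simp
    show False
    proof (cases "b = e")
      case True
      hence "le c b \<or> le b c" using ce by simp
      thus False using swap_eq[OF po ta P(3) P(5) t1(1) t1(2)] swap_eq[OF po ta P(5) P(3) t1(2) t1(1)] bc
        by auto
    next
      case False
      hence ba: "b = a'" using b_cases by simp
      have sb: "\<sigma> b = e" using ba e_def by simp
      have ta': "\<tau> a = c''" using ad td by simp
      have be: "b \<noteq> e" using sb sb_ne by simp
      have ea: "e \<noteq> a" using se s1 ba bc by auto
      have ec: "e \<noteq> c" using s1 se ne(1) by auto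
      have te: "\<tau> e = e \<or> e = c''"
      proof (rule ccontr)
        assume "\<not> (\<tau> e = e \<or> e = c'')"
        hence "e \<in> supp P \<tau>" using eP unfolding supp_def by simp
        hence "e = c \<or> e = c'' \<or> e = b \<or> e = a" using st ad unfolding d_def by auto
        thus False using ec be ea \<open>\<not> (\<tau> e = e \<or> e = c'')\<close> by auto
      qed
      have tle: "le x y \<longleftrightarrow> le (\<tau> x) (\<tau> y)" if "x \<in> P" "y \<in> P" for x y using aut_le[OF ta that] by simp
      have sle: "le x y \<longleftrightarrow> le (\<sigma> x) (\<sigma> y)" if "x \<in> P" "y \<in> P" for x y using aut_le[OF sa that] by simp
      have ab2: "le a b \<or> le b a" using ch(1) ba by auto
      show False
      proof (cases "le a b")
        case True
        hence ce1: "le c e" using sle[OF P(1) P(5)] s1 sb by simp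
        hence "le b (\<tau> e)" using tle[OF P(3) eP] t1 by simp
        show False using te
        proof
          assume "\<tau> e = e"
          hence "le b e" using \<open>le b (\<tau> e)\<close> by simp
          hence "le e b" using sle[OF P(5) eP] sb se ba by simp
          thus False using poset_antisym[OF po P(5) eP \<open>le b e\<close>] be by simp
        next
          assume "e = c''"
          hence "le b a" using \<open>le b (\<tau> e)\<close> ad d_def by simp
          thus False using poset_antisym[OF po P(1) P(5) True] ab by simp
        qed
      next
        case False
        hence ba1: "le b a" using ab2 by simp
        hence ce1: "le e c" using sle[OF P(5) P(1)] s1 sb by simp
        hence "le (\<tau> e) b" using tle[OF eP P(3)] t1 by simp
        show False using te
        proof
          assume "\<tau> e = e"
          hence "le e b" using \<open>le (\<tau> e) b\<close> by simp
          hence "le b e" using sle[OF eP P(5)] sb se ba by simp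
          thus False using poset_antisym[OF po P(5) eP \<open>le b e\<close>] \<open>le e b\<close> be by simp
        next
          assume "e = c''"
          hence "le a b" using \<open>le (\<tau> e) b\<close> ad d_def by simp
          thus False using False by simp
        qed
      qed
    qed
  qed
qed


lemma gen_struct:
  assumes po: "poset P le" and gf: "generator_family P le C2 C2_le 2 \<sigma> S"
    and ij: "i < 2" "j < 2" "S i \<noteq> S j" and aS: "a \<in> S i" and caS: "\<sigma> a \<in> S j"
  shows "\<exists>a'. a' \<in> P \<and> \<sigma> (\<sigma> a) = a \<and> \<sigma> (\<sigma> a') = a' \<and> a' \<noteq> a \<and> (le a a' \<or> le a' a) \<and>
    supp P \<sigma> = {a, a', \<sigma> a, \<sigma> a'}"
proof -
  have sa: "is_aut P le \<sigma>" using gf unfolding generator_family_def by (rule conjunct1)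
  have gfi: "\<forall>i<2. S i \<subseteq> supp P \<sigma> \<and>
            order_iso (S i) le C2 C2_le \<and>
            max_ordered le (supp P \<sigma>) (S i) \<and>
            chain_len le (S i) = chain_len le (supp P \<sigma>) \<and>
            (\<forall>T. max_ordered le (supp P \<sigma>) T \<and> chain_len le T = chain_len le (supp P \<sigma>)
                 \<longrightarrow> card (S i) \<le> card T) \<and>
            \<sigma> ` (S i) = S ((i + 1) mod 2)"
    using gf unfolding generator_family_def by (elim conjE)
  have gfu: "(\<Union>i<2. S i) = supp P \<sigma>" using gf unfolding generator_family_def by (elim conjE)
  have ineq: "i \<noteq> j" using ij by auto
  have ij2: "(i + 1) mod 2 = j" "(j + 1) mod 2 = i"
  proof -
    have "(i = 0 \<and> j = 1) \<or> (i = 1 \<and> j = 0)" using ij ineq by auto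
    thus "(i + 1) mod 2 = j" "(j + 1) mod 2 = i" by auto
  qed
  have Si: "S i \<subseteq> supp P \<sigma>" "order_iso (S i) le C2 C2_le" "\<sigma> ` S i = S j"
    using gfi[rule_format, OF ij(1)] ij2 by simp_all
  have Sj: "\<sigma> ` S j = S i" using gfi[rule_format, OF ij(2)] ij2 by simp
  have un: "supp P \<sigma> = S i \<union> S j"
  proof -
    have "{..<2::nat} = {i, j}" using ij ineq by auto
    thus ?thesis using gfu by auto
  qed
  have suppP: "supp P \<sigma> \<subseteq> P" unfolding supp_def by blast
  obtain f where f: "bij_betw f (S i) C2" "\<forall>x\<in>S i. \<forall>y\<in>S i. le x y \<longleftrightarrow> C2_le (f x) (f y)"
    using Si(2) unfolding order_iso_def by blast
  have "card (S i) = 2" using bij_betw_same_card[OF f(1)] unfolding C2_def by simp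
  then obtain x y where xy: "S i = {x, y}" "x \<noteq> y" by (meson card_2_iff)
  define a' where "a' = (if a = x then y else x)"
  have a': "S i = {a, a'}" "a' \<noteq> a" using xy aS unfolding a'_def by auto
  have a'S: "a' \<in> S i" using a' by simp
  have SiP: "S i \<subseteq> P" using Si(1) suppP by blast
  have aP: "a \<in> P" and a'P: "a' \<in> P" using SiP aS a'S by auto
  have chn: "le a a' \<or> le a' a"
  proof -
    have "C2_le (f a) (f a') \<or> C2_le (f a') (f a)" unfolding C2_le_def by auto
    thus ?thesis using f(2) aS a'S by blast
  qed
  have Sj2: "S j = {\<sigma> a, \<sigma> a'}" using Si(3) a'(1) by simp
  have Si2: "{\<sigma> (\<sigma> a), \<sigma> (\<sigma> a')} = {a, a'}" using Sj Sj2 a'(1) by simp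
  have inj: "inj_on \<sigma> P" using aut_inj[OF sa] .
  have saP: "\<sigma> a \<in> P" "\<sigma> a' \<in> P" using aut_maps[OF sa] aP a'P by auto
  have ssaP: "\<sigma> (\<sigma> a) \<in> P" "\<sigma> (\<sigma> a') \<in> P" using aut_maps[OF sa] saP by auto
  have "\<sigma> (\<sigma> a) \<noteq> \<sigma> (\<sigma> a')"
    using inj_on_contraD[OF inj inj_on_contraD[OF inj a'(2)[symmetric] aP a'P] saP] .
  hence cases2: "(\<sigma> (\<sigma> a) = a \<and> \<sigma> (\<sigma> a') = a') \<or> (\<sigma> (\<sigma> a) = a' \<and> \<sigma> (\<sigma> a') = a)"
    using Si2 by (auto simp: doubleton_eq_iff)
  have fix2: "\<sigma> (\<sigma> a) = a \<and> \<sigma> (\<sigma> a') = a'"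
  proof (rule ccontr)
    assume "\<not> (\<sigma> (\<sigma> a) = a \<and> \<sigma> (\<sigma> a') = a')"
    hence sw: "\<sigma> (\<sigma> a) = a'" "\<sigma> (\<sigma> a') = a" using cases2 by auto
    have l1: "le a a' \<longleftrightarrow> le (\<sigma> a) (\<sigma> a')" using aut_le[OF sa aP a'P] by simp
    have l2: "le (\<sigma> a) (\<sigma> a') \<longleftrightarrow> le a' a" using aut_le[OF sa saP] sw by simp
    have "le a a' \<and> le a' a" using chn l1 l2 by auto
    thus False using poset_antisym[OF po aP a'P] a'(2) by auto
  qed
  have "supp P \<sigma> = {a, a', \<sigma> a, \<sigma> a'}" using un a'(1) Sj2 by auto
  thus ?thesis using fix2 a'P a'(2) chn by blast
qed


lemma sym1_unfold:
  assumes "sym1 P le Q leQ 2 a c"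
  obtains \<sigma> S i j where "generator_family P le Q leQ 2 \<sigma> S" "i < 2" "j < 2" "S i \<noteq> S j"
    "a \<in> S i" "c = \<sigma> a" "c \<in> S j"
proof -
  obtain \<sigma> S i j q where h: "generator_family P le Q leQ 2 \<sigma> S" "i < 2" "j < 2" "S i \<noteq> S j"
    "a \<in> S i" "1 \<le> q" "q < 2" "c = (\<sigma> ^^ q) a" "c \<in> S j"
    using assms unfolding sym1_def by blast
  have "q = 1" using h(6,7) by simp
  hence "c = \<sigma> a" using h(8) by simp
  thus ?thesis using h that by blast
qed

lemma gf_sub:
  assumes gf: "generator_family P le Q leQ r \<sigma> S" and ir: "i < r"
  shows "S i \<subseteq> supp P \<sigma>"
proof -
  have gfi: "\<forall>i<r. S i \<subseteq> supp P \<sigma> \<and>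
            order_iso (S i) le Q leQ \<and>
            max_ordered le (supp P \<sigma>) (S i) \<and>
            chain_len le (S i) = chain_len le (supp P \<sigma>) \<and>
            (\<forall>T. max_ordered le (supp P \<sigma>) T \<and> chain_len le T = chain_len le (supp P \<sigma>)
                 \<longrightarrow> card (S i) \<le> card T) \<and>
            \<sigma> ` (S i) = S ((i + 1) mod r)"
    using gf unfolding generator_family_def by (elim conjE)
  show ?thesis using gfi[rule_format, OF ir] by simp
qed

lemma supp_sub: "supp P \<sigma> \<subseteq> P" unfolding supp_def by blast

lemma two_step:
  assumes po: "poset P le" and s1: "sym1 P le C2 C2_le 2 a c" and s2: "sym1 P le C2 C2_le 2 c b"
    and ab: "a \<noteq> b"
  shows "sym1 P le C2 C2_le 2 a b"
proof -
  obtain \<sigma> S i j where gs: "generator_family P le C2 C2_le 2 \<sigma> S" "i < 2" "j < 2" "S i \<noteq> S j"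
    "a \<in> S i" "c = \<sigma> a" "c \<in> S j" using sym1_unfold[OF s1] by blast
  obtain \<tau> T i2 j2 where gt: "generator_family P le C2 C2_le 2 \<tau> T" "i2 < 2" "j2 < 2" "T i2 \<noteq> T j2"
    "c \<in> T i2" "b = \<tau> c" "b \<in> T j2" using sym1_unfold[OF s2] by blast
  have sa: "is_aut P le \<sigma>" using gs(1) unfolding generator_family_def by (rule conjunct1)
  have ta: "is_aut P le \<tau>" using gt(1) unfolding generator_family_def by (rule conjunct1)
  have SsubP: "S k \<subseteq> P" if kk: "k < 2" for k
  proof -
    have "S k \<subseteq> supp P \<sigma>" using gf_sub[OF gs(1) kk] .
    thus ?thesis using supp_sub[of P] by (rule order_trans)
  qed
  have TsubP: "T k \<subseteq> P" if kk: "k < 2" for k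
  proof -
    have "T k \<subseteq> supp P \<tau>" using gf_sub[OF gt(1) kk] .
    thus ?thesis using supp_sub[of P] by (rule order_trans)
  qed
  have aP: "a \<in> P" using SsubP[OF gs(2)] gs(5) by blast
  have cP: "c \<in> P" using TsubP[OF gt(2)] gt(5) by blast
  have bP: "b \<in> P" using TsubP[OF gt(3)] gt(7) by blast
  show ?thesis
  proof (cases "\<tau> a = a")
    case True
    define \<rho> where "\<rho> = \<tau> \<circ> \<sigma> \<circ> inv_into P \<tau>"
    have g: "generator_family P le C2 C2_le 2 \<rho> (\<lambda>k. \<tau> ` S k)" unfolding \<rho>_def
      using conj_gen[OF gs(1) ta] .
    have injt: "inj_on \<tau> P" using aut_inj[OF ta] .
    have ne: "\<tau> ` S i \<noteq> \<tau> ` S j"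
      using gs(4) inj_on_image_eq_iff[OF injt SsubP[OF gs(2)] SsubP[OF gs(3)]] by simp
    have a_in: "a \<in> \<tau> ` S i" using True gs(5) by (metis imageI)
    have "inv_into P \<tau> a = a" using inv_into_f_f[OF injt aP] True by simp
    hence rb: "b = (\<rho> ^^ 1) a" unfolding \<rho>_def using gs(6) gt(6) by simp
    have b_in: "b \<in> \<tau> ` S j" using gs(7) gt(6) by simp
    show ?thesis unfolding sym1_def
      apply (rule exI[where x=\<rho>], rule exI[where x="\<lambda>k. \<tau> ` S k"])
      apply (rule exI[where x=i], rule exI[where x=j], rule exI[where x=1])
      using g gs(2,3) ne a_in rb b_in by simp
  next
    case tne: False
    show ?thesis
    proof (cases "\<sigma> b = b")
      case True
      define si where "si = inv_into P \<sigma>"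
      have sia: "is_aut P le si" unfolding si_def using aut_inv[OF sa] .
      define \<rho> where "\<rho> = si \<circ> \<tau> \<circ> inv_into P si"
      have g: "generator_family P le C2 C2_le 2 \<rho> (\<lambda>k. si ` T k)" unfolding \<rho>_def
        using conj_gen[OF gt(1) sia] .
      have injsi: "inj_on si P" using aut_inj[OF sia] .
      have injs: "inj_on \<sigma> P" using aut_inj[OF sa] .
      have sb: "bij_betw \<sigma> P P" using sa unfolding is_aut_def by (rule conjunct1)
      have ne: "si ` T i2 \<noteq> si ` T j2"
        using gt(4) inj_on_image_eq_iff[OF injsi TsubP[OF gt(2)] TsubP[OF gt(3)]] by simp
      have sic: "si c = a" unfolding si_def using gs(6) inv_into_f_f[OF injs aP] by simp
      have sib: "si b = b" unfolding si_def using True inv_into_f_f[OF injs bP] by metis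
      have a_in: "a \<in> si ` T i2" using sic gt(5) by (metis imageI)
      have isi: "inv_into P si a = \<sigma> a" unfolding si_def using inv_into_inv_into_eq[OF sb aP] .
      have rb: "b = (\<rho> ^^ 1) a" unfolding \<rho>_def using isi gs(6) gt(6) sib by simp
      have b_in: "b \<in> si ` T j2" using gt(7) sib by (metis imageI)
      show ?thesis unfolding sym1_def
        apply (rule exI[where x=\<rho>], rule exI[where x="\<lambda>k. si ` T k"])
        apply (rule exI[where x=i2], rule exI[where x=j2], rule exI[where x=1])
        using g gt(2,3) ne a_in rb b_in by simp
    next
      case sne: False
      obtain a' where A: "a' \<in> P" "\<sigma> (\<sigma> a) = a" "\<sigma> (\<sigma> a') = a'" "a' \<noteq> a" "le a a' \<or> le a' a"
        "supp P \<sigma> = {a, a', \<sigma> a, \<sigma> a'}"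
        using gen_struct[OF po gs(1-5)] gs(6,7) by blast
      obtain c'' where C: "c'' \<in> P" "\<tau> (\<tau> c) = c" "\<tau> (\<tau> c'') = c''" "c'' \<noteq> c" "le c c'' \<or> le c'' c"
        "supp P \<tau> = {c, c'', \<tau> c, \<tau> c''}"
        using gen_struct[OF po gt(1-5)] gt(6,7) by blast
      have e1: "\<sigma> a = c" "\<sigma> c = a" using gs(6) A(2) by simp_all
      have e2: "\<tau> c = b" "\<tau> b = c" using gt(6) C(2) by simp_all
      have e3: "supp P \<sigma> = {a, a', c, \<sigma> a'}" using A(6) gs(6) by simp
      have e4: "supp P \<tau> = {c, c'', b, \<tau> c''}" using C(6) gt(6) by simp
      show ?thesis
        using contra[OF po sa ta aP A(1) cP C(1) bP e1 A(3) e2 C(3) A(4) C(4) A(5) C(5) e3 e4 ab tne sne] by (rule FalseE)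
    qed
  qed
qed

lemma no_high:
  assumes po: "poset P le"
  shows "\<forall>a b. symk P le C2 C2_le 2 k a b \<longrightarrow> k < 2"
proof (induction k rule: less_induct)
  case (less k)
  show ?case
  proof (intro allI impI)
    fix a b assume h: "symk P le C2 C2_le 2 k a b"
    show "k < 2"
    proof (rule ccontr)
      assume "\<not> k < 2"
      hence k2le: "2 \<le> k" by simp
      define m where "m = k - 2"
      have km: "k = Suc (Suc m)" using k2le unfolding m_def by simp
      have h2: "(\<forall>j \<in> {..<Suc (Suc m)}. \<not> symk P le C2 C2_le 2 j a b) \<and>
        (\<exists>c\<in>P. \<exists>j \<in> {1..<Suc (Suc m)}.
          symk P le C2 C2_le 2 j a c \<and> symk P le C2 C2_le 2 (Suc (Suc m) - j) c b)"
        using h[unfolded km symk.simps(3)] .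
      then obtain c j where cj: "c \<in> P" "1 \<le> j" "j < k" "symk P le C2 C2_le 2 j a c"
        "symk P le C2 C2_le 2 (k - j) c b" using km by auto
      have j1: "j < 2" using less.IH[OF cj(3)] cj(4) by blast
      have kj: "k - j < 2" using less.IH[of "k - j"] cj(2,3,5) by auto
      have jj: "j = 1" "k - j = 1" using j1 kj cj(2,3) by auto
      hence k2: "k = 2" using cj(3) by simp
      have nall: "\<forall>j \<in> {..<Suc (Suc m)}. \<not> symk P le C2 C2_le 2 j a b" using h2 by (rule conjunct1)
      have n0: "\<not> symk P le C2 C2_le 2 0 a b" using bspec[OF nall, of 0] by simp
      have n1: "\<not> symk P le C2 C2_le 2 (Suc 0) a b" using bspec[OF nall, of "Suc 0"] by simp
      have nb: "a \<noteq> b" "\<not> sym1 P le C2 C2_le 2 a b"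
        using n0 n1 by (simp_all only: symk.simps not_False_eq_True)
      have s1: "sym1 P le C2 C2_le 2 a c" using cj(4) jj(1) by (simp add: One_nat_def)
      have s2: "sym1 P le C2 C2_le 2 c b" using cj(5) jj(2) by (simp add: One_nat_def)
      have "a \<noteq> b" using nb(1) .
      hence "sym1 P le C2 C2_le 2 a b" using two_step[OF po s1 s2] by simp
      thus False using nb(2) by simp
    qed
  qed
qed

theorem mainTheorem4:
  fixes P :: "'a set" and le :: "'a \<Rightarrow> 'a \<Rightarrow> bool" and a b :: 'a and k :: nat
  assumes "finite P" and "poset P le" and "a \<in> P" and "b \<in> P"
    and "symk P le C2 C2_le 2 k a b"
  shows "k \<in> {0, 1}"
proof -
  have "k < 2" using no_high[OF assms(2)] assms(5) by blast
  thus ?thesis by auto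
qed

end
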